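(* Fix a prompt $q$, $\beta>0$, $\varepsilon>0$, and assume $1-\rho^+(q)-\rho^-(q)>0$ and $0<p_{\mathrm{ref}}(q)<1$. Let $(\pi_k)_{k\ge0}$ be policies such that, for each $k\ge1$, $\pi_k(\cdot\mid q)$ maximizes over all distributions $\pi(\cdot\mid q)$ on $\mathcal O$ the noisy regularized objective \[ \frac{(1-\rho^+(q)-\rho^-(q))\,\bigl(p_\pi(q)-p_{\pi_{k-1}}(q)\bigr)}{\sqrt{\mu_{\pi_{k-1}}(q)(1-\mu_{\pi_{k-1}}(q))+\varepsilon}}-\beta\,\mathrm{KL}\bigl(\pi(\cdot\mid q)\,\|\,\pi_{\mathrm{ref}}(\cdot\mid q)\bigr). \] Then $p_{\pi_k}(q)>p_{\mathrm{ref}}(q)$ for all $k\ge1$.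
   Context: Setting: $\mathcal O$ is a countable set of responses; $r^*:\mathcal Q\times\mathcal O\to\{0,1\}$ is the true binary reward; a policy gives a distribution $\pi(\cdot\mid q)$ on $\mathcal O$; $p_\pi(q)=\mathbb E_{o\sim\pi(\cdot\mid q)}[r^*(q,o)]$. $\pi_{\mathrm{ref}}$ is a fixed reference policy and $p_{\mathrm{ref}}(q)=p_{\pi_{\mathrm{ref}}}(q)$. Flip rates $\rho^+(q),\rho^-(q)\in[0,1]$ are the probabilities that a true reward $0$ is observed as $1$, respectively a true reward $1$ is observed as $0$; $\mu_{\pi}(q)=\rho^+(q)+(1-\rho^+(q)-\rho^-(q))\,p_{\pi}(q)$. $\mathrm{KL}$ is the Kullback–Leibler divergence. *)

theory Defs
  imports "HOL-Probability.Probability"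
begin

definition succ_prob :: "('q \<Rightarrow> 'o \<Rightarrow> real) \<Rightarrow> ('q \<Rightarrow> 'o pmf) \<Rightarrow> 'q \<Rightarrow> real" where
  "succ_prob r \<pi> q = measure_pmf.expectation (\<pi> q) (r q)"

definition noisy_prob :: "real \<Rightarrow> real \<Rightarrow> real \<Rightarrow> real" where
  "noisy_prob rp rm p = rp + (1 - rp - rm) * p"

definition KL_term :: "'o pmf \<Rightarrow> 'o pmf \<Rightarrow> 'o \<Rightarrow> real" where
  "KL_term P R x = (if pmf P x = 0 then 0 else pmf P x * ln (pmf P x / pmf R x))"

definition KL :: "'o pmf \<Rightarrow> 'o pmf \<Rightarrow> ereal" where
  "KL P R = (if set_pmf P \<subseteq> set_pmf R
     then enn2ereal (\<integral>\<^sup>+ x. ennreal (max 0 (KL_term P R x)) \<partial>count_space UNIV)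
        - enn2ereal (\<integral>\<^sup>+ x. ennreal (max 0 (- KL_term P R x)) \<partial>count_space UNIV)
     else \<infinity>)"

definition noisy_obj ::
  "('q \<Rightarrow> 'o \<Rightarrow> real) \<Rightarrow> ('q \<Rightarrow> real) \<Rightarrow> ('q \<Rightarrow> real) \<Rightarrow> real \<Rightarrow> real \<Rightarrow>
   ('q \<Rightarrow> 'o pmf) \<Rightarrow> ('q \<Rightarrow> 'o pmf) \<Rightarrow> 'q \<Rightarrow> ('q \<Rightarrow> 'o pmf) \<Rightarrow> ereal" where
  "noisy_obj r rp rm \<beta> \<epsilon> \<pi>ref \<pi>old q \<pi> =
     (let mu = noisy_prob (rp q) (rm q) (succ_prob r \<pi>old q) in
      ereal ((1 - rp q - rm q) * (succ_prob r \<pi> q - succ_prob r \<pi>old q)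
             / sqrt (mu * (1 - mu) + \<epsilon>))
      - ereal \<beta> * KL (\<pi> q) (\<pi>ref q))"

end

theory Submission
  imports Defs
begin


lemma KL_nonneg: "KL P R \<ge> 0"
proof (cases "set_pmf P \<subseteq> set_pmf R")
  case False thus ?thesis by (simp add: KL_def)
next
  case True
  define f where "f = KL_term P R"
  have fge: "f x \<ge> pmf P x - pmf R x" for x
  proof (cases "pmf P x = 0")
    case True thus ?thesis by (simp add: f_def KL_term_def)
  next
    case False
    hence Pp: "pmf P x > 0" using pmf_nonneg[of P x] by linarith
    have "pmf R x \<noteq> 0" using True False by (auto simp: set_pmf_iff)
    hence Rp: "pmf R x > 0" using pmf_nonneg[of R x] by linarith
    have "ln (pmf R x / pmf P x) \<le> pmf R x / pmf P x - 1" using Pp Rp by (intro ln_le_minus_one) simp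
    moreover have "ln (pmf P x / pmf R x) = - ln (pmf R x / pmf P x)" using Pp Rp by (simp add: ln_div)
    ultimately have "pmf P x * ln (pmf P x / pmf R x) \<ge> pmf P x * (1 - pmf R x / pmf P x)"
      using Pp by (intro mult_left_mono) auto
    also have "pmf P x * (1 - pmf R x / pmf P x) = pmf P x - pmf R x" using Pp by (simp add: field_simps)
    finally show ?thesis using False by (simp add: f_def KL_term_def)
  qed
  have pw: "ennreal (max 0 (- f x)) + ennreal (pmf P x) \<le> ennreal (max 0 (f x)) + ennreal (pmf R x)" for x
  proof -
    have "max 0 (- f x) + pmf P x \<le> max 0 (f x) + pmf R x" using fge[of x] by linarith
    hence "ennreal (max 0 (- f x) + pmf P x) \<le> ennreal (max 0 (f x) + pmf R x)" by (rule ennreal_leI)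
    thus ?thesis by simp
  qed
  have one: "(\<integral>\<^sup>+ x. ennreal (pmf Q x) \<partial>count_space UNIV) = 1" for Q :: "'a pmf"
    by (simp add: nn_integral_pmf emeasure_pmf)
  have "(\<integral>\<^sup>+ x. ennreal (max 0 (- f x)) \<partial>count_space UNIV) + 1
      = (\<integral>\<^sup>+ x. ennreal (max 0 (- f x)) + ennreal (pmf P x) \<partial>count_space UNIV)"
    by (subst nn_integral_add) (auto simp: one)
  also have "\<dots> \<le> (\<integral>\<^sup>+ x. ennreal (max 0 (f x)) + ennreal (pmf R x) \<partial>count_space UNIV)"
    by (intro nn_integral_mono pw)
  also have "\<dots> = (\<integral>\<^sup>+ x. ennreal (max 0 (f x)) \<partial>count_space UNIV) + 1"
    by (subst nn_integral_add) (auto simp: one)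
  finally have le: "(\<integral>\<^sup>+ x. ennreal (max 0 (- f x)) \<partial>count_space UNIV) \<le> (\<integral>\<^sup>+ x. ennreal (max 0 (f x)) \<partial>count_space UNIV)"
    by (subst (asm) (1 2) add.commute) (simp add: ennreal_add_left_cancel_le)
  hence "enn2ereal (\<integral>\<^sup>+ x. ennreal (max 0 (- f x)) \<partial>count_space UNIV) \<le> enn2ereal (\<integral>\<^sup>+ x. ennreal (max 0 (f x)) \<partial>count_space UNIV)"
    by (simp only: less_eq_ennreal.rep_eq)
  hence "0 \<le> enn2ereal (\<integral>\<^sup>+ x. ennreal (max 0 (f x)) \<partial>count_space UNIV) - enn2ereal (\<integral>\<^sup>+ x. ennreal (max 0 (- f x)) \<partial>count_space UNIV)"
    by (cases "(\<integral>\<^sup>+ x. ennreal (max 0 (- f x)) \<partial>count_space UNIV)"; cases "(\<integral>\<^sup>+ x. ennreal (max 0 (f x)) \<partial>count_space UNIV)") auto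
  thus ?thesis using True by (simp add: KL_def f_def)
qed



lemma int_two:
  fixes R :: "'a pmf"
  assumes "\<alpha> \<ge> 0" "\<gamma> \<ge> 0"
  shows "(\<integral>\<^sup>+x. ennreal (pmf R x * (if x \<in> S then \<alpha> else \<gamma>)) \<partial>count_space UNIV)
     = ennreal (\<alpha> * measure R S + \<gamma> * (1 - measure R S))"
proof -
  have pw: "ennreal (pmf R x * (if x \<in> S then \<alpha> else \<gamma>)) =
     ennreal \<alpha> * (ennreal (pmf R x) * indicator S x) + ennreal \<gamma> * (ennreal (pmf R x) * indicator (-S) x)" for x
    using assms by (auto simp: indicator_def ennreal_mult' mult.commute)
  have e: "(\<integral>\<^sup>+x. ennreal (pmf R x) * indicator A x \<partial>count_space UNIV) = ennreal (measure R A)" for A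
    by (simp add: nn_integral_measure_pmf[symmetric] measure_pmf.emeasure_eq_measure)
  have "(\<integral>\<^sup>+x. ennreal (pmf R x * (if x \<in> S then \<alpha> else \<gamma>)) \<partial>count_space UNIV)
     = ennreal \<alpha> * ennreal (measure R S) + ennreal \<gamma> * ennreal (measure R (-S))"
    by (simp only: pw, subst nn_integral_add) (auto simp: nn_integral_cmult e)
  also have "measure R (-S) = 1 - measure R S"
    using measure_pmf.prob_compl[of S R] by (simp add: Compl_eq_Diff_UNIV)
  finally show ?thesis using assms
    by (simp add: ennreal_mult'[symmetric] ennreal_plus[symmetric] del: ennreal_plus)
qed



lemma alg: fixes p t :: real assumes "p < 1"
  shows "p * ((1+t)*((1+t)-1)) + (1-p)*((1 - t*p/(1-p))*((1-t*p/(1-p))-1)) = t^2*p/(1-p)"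
proof -
  define u where "u = t*p/(1-p)"
  have e: "(1-p)*u = t*p" using assms by (simp add: u_def)
  have "t^2*p/(1-p) = t * u" by (simp add: u_def power2_eq_square)
  moreover have "p * ((1+t)*((1+t)-1)) + (1-p)*((1 - u)*((1-u)-1)) = t * u" using e by algebra
  ultimately show ?thesis unfolding u_def by linarith
qed

lemma succ_prob_meas:
  assumes "\<And>x. r q x \<in> {0, 1}"
  shows "succ_prob r \<pi> q = measure (\<pi> q) {x. r q x = 1}"
proof -
  define S where "S = {x. r q x = 1}"
  have eq: "r q = indicator S" using assms by (auto simp: fun_eq_iff indicator_def S_def)
  show ?thesis unfolding succ_prob_def eq by (simp add: indicator_eq_1_iff)
qed

lemma tilt_exists:
  fixes R :: "'o pmf" and S :: "'o set"
  assumes p0: "0 < measure R S" and p1: "measure R S < 1" and cpos: "c > 0" and bpos: "\<beta> > 0"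
  shows "\<exists>\<sigma> K. KL \<sigma> R = ereal K \<and> set_pmf \<sigma> \<subseteq> set_pmf R \<and>
           c * (measure \<sigma> S - measure R S) - \<beta> * K > 0"
proof -
  define p where "p = measure R S"
  define t where "t = min (c * (1 - p) / (2 * \<beta>)) ((1 - p) / (2 * p))"
  have tpos: "t > 0" using p0 p1 cpos bpos by (auto simp: t_def p_def)
  define a where "a = 1 + t"
  define b where "b = 1 - t * p / (1 - p)"
  have t2: "t * p / (1 - p) \<le> 1/2" using p0 p1 unfolding t_def p_def
    by (auto simp: field_simps min_def)
  have apos: "a \<ge> 1" using tpos by (simp add: a_def)
  have bpos': "b \<ge> 1/2" "b \<le> 1" using t2 tpos p0 p1 by (auto simp: b_def p_def)
  have norm: "a * p + b * (1 - p) = 1" using p1 by (simp add: a_def b_def p_def field_simps)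
  define g where "g x = pmf R x * (if x \<in> S then a else b)" for x
  have gnn: "\<And>x. 0 \<le> g x" using apos bpos' by (simp add: g_def)
  have gint: "(\<integral>\<^sup>+x. ennreal (g x) \<partial>count_space UNIV) = 1"
    unfolding g_def using apos bpos' by (subst int_two) (auto simp: norm[unfolded p_def])
  define \<sigma> where "\<sigma> = embed_pmf g"
  have ps: "pmf \<sigma> x = g x" for x unfolding \<sigma>_def using gnn gint by (rule pmf_embed_pmf)
  have sub: "set_pmf \<sigma> \<subseteq> set_pmf R" using apos bpos' by (auto simp: set_pmf_iff ps g_def)
  have "ennreal (measure \<sigma> S) = (\<integral>\<^sup>+x. ennreal (pmf \<sigma> x) * indicator S x \<partial>count_space UNIV)"
    by (simp add: nn_integral_measure_pmf[symmetric] measure_pmf.emeasure_eq_measure)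
  also have "\<dots> = (\<integral>\<^sup>+x. ennreal (pmf R x * (if x \<in> S then a else 0)) \<partial>count_space UNIV)"
    by (intro nn_integral_cong) (auto simp: ps g_def indicator_def)
  also have "\<dots> = ennreal (a * p)" using apos by (subst int_two) (auto simp: p_def)
  finally have ms: "measure \<sigma> S = a * p" using apos p0 by (simp add: p_def)
  have kt: "KL_term \<sigma> R x = pmf R x * (if x \<in> S then a * ln a else b * ln b)" for x
  proof (cases "pmf R x = 0")
    case True thus ?thesis by (simp add: KL_term_def ps g_def)
  next
    case False
    hence "pmf R x > 0" using pmf_nonneg[of R x] by linarith
    thus ?thesis using apos bpos' by (auto simp: KL_term_def ps g_def)
  qed
  have lna: "a * ln a \<ge> 0" using apos by simp
  have lnb: "b * ln b \<le> 0" using bpos' by (intro mult_nonneg_nonpos) auto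
  have kp: "max 0 (KL_term \<sigma> R x) = pmf R x * (if x \<in> S then a * ln a else 0)" for x
    using mult_nonneg_nonneg[OF pmf_nonneg[of R x] lna] mult_nonneg_nonpos[OF pmf_nonneg[of R x] lnb] by (auto simp: kt)
  have kn: "max 0 (- KL_term \<sigma> R x) = pmf R x * (if x \<in> S then 0 else - (b * ln b))" for x
    using mult_nonneg_nonneg[OF pmf_nonneg[of R x] lna] mult_nonneg_nonpos[OF pmf_nonneg[of R x] lnb] by (auto simp: kt)
  define K where "K = p * (a * ln a) + (1 - p) * (b * ln b)"
  have KL: "KL \<sigma> R = ereal K"
  proof -
    have n1: "0 \<le> a * ln a * p + 0 * (1 - p)" using lna p0 by (simp add: p_def)
    have n2: "0 \<le> 0 * p + - (b * ln b) * (1 - p)" using lnb p1 by (simp add: p_def mult_nonpos_nonneg)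
    show ?thesis unfolding KL_def
      apply (simp only: kp kn if_P[OF sub])
      apply (subst (1 2) int_two)
      using lna lnb n1 n2 apply (simp_all only: p_def[symmetric] enn2ereal_ennreal)
      apply (auto simp: K_def algebra_simps)
      done
  qed
  have h1: "a * ln a \<le> a * (a - 1)" using apos by (intro mult_left_mono ln_le_minus_one) auto
  have h2: "b * ln b \<le> b * (b - 1)" using bpos' by (intro mult_left_mono ln_le_minus_one) auto
  have "K \<le> p * (a * (a - 1)) + (1 - p) * (b * (b - 1))"
    unfolding K_def using p0 p1 unfolding p_def by (intro add_mono mult_left_mono h1 h2) auto
  also have "\<dots> = t^2 * p / (1 - p)" using p1 unfolding a_def b_def p_def
    by (rule alg)
  finally have Kle: "K \<le> t^2 * p / (1 - p)" .
  have tle: "t \<le> c * (1 - p) / (2 * \<beta>)" unfolding t_def by simp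
  have "\<beta> * (t^2 * p / (1 - p)) = t * p * (\<beta> * t / (1 - p))" using p1 by (simp add: power2_eq_square field_simps)
  also have "\<beta> * t / (1 - p) \<le> c / 2" using tle bpos p1 p0 by (simp add: p_def field_simps)
  hence "t * p * (\<beta> * t / (1 - p)) \<le> t * p * (c / 2)" using tpos p0 by (intro mult_left_mono) (auto simp: p_def)
  finally have "\<beta> * K \<le> t * p * (c / 2)" using Kle bpos
    by (meson mult_left_mono less_imp_le order_trans)
  moreover have "c * (measure \<sigma> S - measure R S) = c * t * p" by (simp add: ms a_def p_def algebra_simps)
  moreover have "t * p * (c / 2) < c * t * p" using tpos cpos p0 by (simp add: p_def)
  ultimately have "c * (measure \<sigma> S - measure R S) - \<beta> * K > 0" by linarith
  thus ?thesis using KL sub by blast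
qed


theorem proposition2:
  fixes r :: "'q \<Rightarrow> 'o::countable \<Rightarrow> real"
    and rp rm :: "'q \<Rightarrow> real"
    and \<pi>ref :: "'q \<Rightarrow> 'o pmf"
    and \<pi> :: "nat \<Rightarrow> 'q \<Rightarrow> 'o pmf"
    and q :: 'q and \<beta> \<epsilon> :: real
  assumes r_bin: "\<And>q x. r q x \<in> {0, 1}"
    and rp_rng: "\<And>q. 0 \<le> rp q \<and> rp q \<le> 1"
    and rm_rng: "\<And>q. 0 \<le> rm q \<and> rm q \<le> 1"
    and beta_pos: "\<beta> > 0"
    and eps_pos: "\<epsilon> > 0"
    and gap: "1 - rp q - rm q > 0"
    and ref_pos: "0 < succ_prob r \<pi>ref q"
    and ref_lt1: "succ_prob r \<pi>ref q < 1"
    and opt: "\<And>k \<sigma>. k \<ge> 1 \<Longrightarrow>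
        noisy_obj r rp rm \<beta> \<epsilon> \<pi>ref (\<pi> (k - 1)) q \<sigma>
          \<le> noisy_obj r rp rm \<beta> \<epsilon> \<pi>ref (\<pi> (k - 1)) q (\<pi> k)"
  shows "\<forall>k\<ge>1. succ_prob r (\<pi> k) q > succ_prob r \<pi>ref q"
proof (intro allI impI)
  fix k :: nat assume k: "k \<ge> 1"
  define S where "S = {x. r q x = 1}"
  have sp: "succ_prob r \<pi>' q = measure (\<pi>' q) S" for \<pi>' unfolding S_def by (rule succ_prob_meas) (rule r_bin)
  define G where "G = 1 - rp q - rm q"
  define po where "po = succ_prob r (\<pi> (k - 1)) q"
  define mu where "mu = noisy_prob (rp q) (rm q) po"
  define sq where "sq = sqrt (mu * (1 - mu) + \<epsilon>)"
  have po01: "0 \<le> po" "po \<le> 1" unfolding po_def sp by auto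
  have m1: "(1 - rp q - rm q) * po \<le> 1 - rp q - rm q" using po01 gap by (intro mult_left_le) auto
  have m0: "0 \<le> (1 - rp q - rm q) * po" using po01 gap by simp
  have "0 \<le> mu" "mu \<le> 1" unfolding mu_def noisy_prob_def
    using m0 m1 rp_rng[of q] rm_rng[of q] by linarith+
  hence sqpos: "sq > 0" unfolding sq_def using eps_pos by (intro real_sqrt_gt_zero) (simp add: add_nonneg_pos)
  define c where "c = G / sq"
  have cpos: "c > 0" using gap sqpos by (simp add: c_def G_def)
  have obj: "noisy_obj r rp rm \<beta> \<epsilon> \<pi>ref (\<pi> (k - 1)) q \<pi>' =
      ereal (G * (succ_prob r \<pi>' q - po) / sq) - ereal \<beta> * KL (\<pi>' q) (\<pi>ref q)" for \<pi>'
    by (simp add: noisy_obj_def Let_def G_def po_def mu_def sq_def)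
  obtain \<sigma> K where KL\<sigma>: "KL \<sigma> (\<pi>ref q) = ereal K"
     and gain: "c * (measure \<sigma> S - measure (\<pi>ref q) S) - \<beta> * K > 0"
    using tilt_exists[of "\<pi>ref q" S c \<beta>] ref_pos ref_lt1 cpos beta_pos unfolding sp by blast
  show "succ_prob r (\<pi> k) q > succ_prob r \<pi>ref q"
  proof (rule ccontr)
    assume "\<not> ?thesis"
    hence le: "measure (\<pi> k q) S \<le> measure (\<pi>ref q) S" unfolding sp by simp
    have "noisy_obj r rp rm \<beta> \<epsilon> \<pi>ref (\<pi> (k - 1)) q (\<pi> k)
        \<le> ereal (G * (measure (\<pi> k q) S - po) / sq)"
    proof -
      have "KL (\<pi> k q) (\<pi>ref q) \<ge> 0" by (rule KL_nonneg)
      thus ?thesis unfolding obj sp using beta_pos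
        by (cases "KL (\<pi> k q) (\<pi>ref q)") auto
    qed
    also have "\<dots> \<le> ereal (G * (measure (\<pi>ref q) S - po) / sq)"
      using le gap sqpos unfolding G_def by (auto intro!: divide_right_mono mult_left_mono)
    also have "\<dots> < ereal (G * (measure \<sigma> S - po) / sq - \<beta> * K)"
    proof -
      have "G * (measure \<sigma> S - po) / sq - G * (measure (\<pi>ref q) S - po) / sq
          = c * (measure \<sigma> S - measure (\<pi>ref q) S)"
        unfolding c_def using sqpos by (simp add: field_simps)
      thus ?thesis using gain by simp
    qed
    also have "\<dots> = noisy_obj r rp rm \<beta> \<epsilon> \<pi>ref (\<pi> (k - 1)) q (\<lambda>_. \<sigma>)"
      unfolding obj sp using KL\<sigma> by simp
    finally show False using opt[OF k, of "\<lambda>_. \<sigma>"] by simp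
  qed
qed

end
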